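(* For any odd $b\geq1$ and any $n>b$, the set $R_n^*(b)$ listed in $\prec$ order (increasing) is a $5$-Gray code: any two consecutive sequences in the list differ in at most $5$ positions.
   Context: A restricted growth function of length $n$ is an integer sequence $s_1\ldots s_n$ with $s_1=0$ and $0\leq s_{i+1}\leq \max\{s_j\}_{j=1}^i+1$ for $1\leq i\leq n-1$; $R_n$ is the set of these. For an integer $b\geq1$, $R^*_n(b)=\{s_1\ldots s_n\in R_n: \max_i s_i= b\}$. The Reflected Gray Code Order $\prec$ on length-$n$ sequences of nonnegative integers: $s_1\ldots s_n\prec t_1\ldots t_n$ if, for the smallest $k$ with $s_k\neq t_k$, either $\sum_{i=1}^{k-1}s_i$ is even and $s_k<t_k$, or $\sum_{i=1}^{k-1}s_i$ is odd and $s_k>t_k$. A list of same-length sequences is a $d$-Gray code if the Hamming distance (number of differing positions) between successive sequences is at most $d$. *)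

theory Defs
  imports Main
begin

text \<open>Sequences s_1 ... s_n are represented as lists of naturals of length n,
  with 0-based indexing: s_i is s ! (i - 1).\<close>

definition rgf :: "nat \<Rightarrow> nat list \<Rightarrow> bool" where
  "rgf n s \<longleftrightarrow> length s = n \<and> (n \<ge> 1 \<longrightarrow> s ! 0 = 0) \<and>
     (\<forall>i. i + 1 < n \<longrightarrow> s ! (i + 1) \<le> Max {s ! j | j. j \<le> i} + 1)"

definition R :: "nat \<Rightarrow> nat list set" where
  "R n = {s. rgf n s}"

definition Rstar :: "nat \<Rightarrow> nat \<Rightarrow> nat list set" where
  "Rstar n b = {s \<in> R n. Max (set s) = b}"

definition rgc_less :: "nat list \<Rightarrow> nat list \<Rightarrow> bool" where
  "rgc_less s t \<longleftrightarrow> length s = length t \<and>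
     (\<exists>k < length s. take k s = take k t \<and> s ! k \<noteq> t ! k \<and>
        ((even (sum_list (take k s)) \<and> s ! k < t ! k) \<or>
         (odd (sum_list (take k s)) \<and> s ! k > t ! k)))"

definition hamming :: "nat list \<Rightarrow> nat list \<Rightarrow> nat" where
  "hamming s t = card {i. i < length s \<and> s ! i \<noteq> t ! i}"

end

theory Submission
  imports Defs
begin


fun okw :: "nat \<Rightarrow> nat \<Rightarrow> nat list \<Rightarrow> bool" where
  "okw b m [] = (m = b)"
| "okw b m (x # w) = (x \<le> Suc m \<and> okw b (max m x) w)"

fun okp :: "nat \<Rightarrow> nat list \<Rightarrow> bool" where
  "okp m [] = True"
| "okp m (x # w) = (x \<le> Suc m \<and> okp (max m x) w)"

fun Fw :: "nat \<Rightarrow> nat \<Rightarrow> bool \<Rightarrow> nat \<Rightarrow> nat list" where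
  "Fw b m e 0 = []"
| "Fw b m e (Suc r) = (if \<not> e \<and> b - m \<le> r then 0 # Fw b m e r
     else if m < b then Suc m # Fw b (Suc m) (e \<noteq> odd (Suc m)) r
     else b # Fw b b (e \<noteq> odd b) r)"

fun lp :: "bool \<Rightarrow> nat list \<Rightarrow> nat list \<Rightarrow> bool" where
  "lp e (x # u) (y # v) = (if x = y then lp (e \<noteq> odd x) u v else (if e then y < x else x < y))"
| "lp e _ _ = False"

fun hdist :: "nat list \<Rightarrow> nat list \<Rightarrow> nat" where
  "hdist (x # u) (y # v) = (if x = y then 0 else 1) + hdist u v"
| "hdist _ _ = 0"

lemma okw_len: "okw b m w \<Longrightarrow> m \<le> b \<and> b - m \<le> length w"
proof (induction w arbitrary: m)
  case (Cons x w)
  have "okw b (max m x) w" using Cons.prems by simp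
  then have "max m x \<le> b \<and> b - max m x \<le> length w" using Cons.IH by blast
  then show ?case using Cons.prems by (auto simp: max_def split: if_splits)
qed simp

lemma okw_le: "okw b m (x # w) \<Longrightarrow> x \<le> b"
  using okw_len[of b "max m x" w] by auto

lemma Fw_len: "length (Fw b m e r) = r"
  by (induction r arbitrary: m e) auto

lemma Fw_ok: "m \<le> b \<Longrightarrow> b - m \<le> r \<Longrightarrow> okw b m (Fw b m e r)"
  by (induction r arbitrary: m e) auto

lemma Fw_min: "okw b m w \<Longrightarrow> length w = r \<Longrightarrow> w \<noteq> Fw b m e r \<Longrightarrow> lp e (Fw b m e r) w"
proof (induction w arbitrary: m e r)
  case Nil then show ?case by simp
next
  case (Cons x w)
  then obtain r' where r: "r = Suc r'" by (cases r) auto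
  have lw: "length w = r'" using Cons r by simp
  have ok: "x \<le> Suc m" "okw b (max m x) w" using Cons by auto
  have mb: "m \<le> b" using okw_len[OF Cons(2)] by simp
  have xb: "x \<le> b" using okw_le Cons(2) by blast
  have l2: "b - max m x \<le> r'" using okw_len[OF ok(2)] lw by simp
  show ?case
  proof (cases "\<not> e \<and> b - m \<le> r'")
    case True
    then show ?thesis using Cons.IH[where m="max m x" and e=e and r=r'] Cons.prems ok lw r by auto
  next
    case F1: False
    show ?thesis
    proof (cases "m < b")
      case True
      then show ?thesis using F1 Cons.IH[where m="max m x" and e="e \<noteq> odd (Suc m)" and r=r'] Cons.prems ok lw r l2
        by (auto simp: max_def split: if_splits)
    next
      case False
      then have "m = b" using mb by simp
      then show ?thesis using F1 Cons.IH[where m="max m x" and e="e \<noteq> odd b" and r=r'] Cons.prems ok lw r l2 xb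
        by (auto simp: max_def split: if_splits)
    qed
  qed
qed

lemma lp_swap: "lp (\<not> e) u v = lp e v u"
  by (induction e u v rule: lp.induct) (auto elim: lp.elims)

lemma Fw_tight: "b - m = d \<Longrightarrow> m \<le> b \<Longrightarrow> Fw b m e d = [Suc m..<Suc b]"
proof (induction d arbitrary: m e)
  case 0 then show ?case by simp
next
  case (Suc d)
  then have "m < b" by simp
  then show ?case using Suc.IH[where m="Suc m" and e="e \<noteq> odd (Suc m)"] Suc.prems
    by (simp add: upt_conv_Cons)
qed

lemma Fw_even: "m \<le> b \<Longrightarrow> b - m \<le> r \<Longrightarrow> Fw b m False r = replicate (r - (b - m)) 0 @ [Suc m..<Suc b]"
proof (induction r)
  case 0 then show ?case by simp
next
  case (Suc r)
  show ?case
  proof (cases "b - m \<le> r")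
    case True
    then show ?thesis using Suc by (simp add: Suc_diff_le)
  next
    case False
    then have "b - m = Suc r" using Suc by simp
    then show ?thesis using Fw_tight[of b m "Suc r" False] Suc.prems by simp
  qed
qed

lemma Fw_top: "odd b \<Longrightarrow> Fw b b True (Suc r) = b # replicate r 0"
  using Fw_even[of b b r] by simp

lemma hdist_same: "hdist l l = 0"
  by (induction l) auto

lemma hdist_append: "length a = length c \<Longrightarrow> hdist (a @ u) (c @ v) = hdist a c + hdist u v"
  by (induction a c rule: list_induct2) auto

lemma hdist_sym: "hdist u v = hdist v u"
  by (induction u v rule: hdist.induct) (auto elim: hdist.elims)

lemma key2:
  assumes "odd b" "M < b" "b - M \<le> r"
  shows "hdist (Fw b M (odd (Suc M)) r) (Fw b (Suc M) (odd (Suc M)) r) \<le> 4"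
proof (cases "odd M")
  case True
  define z where "z = r - (b - M)"
  have A: "Fw b M False r = replicate z 0 @ Suc M # [Suc (Suc M)..<Suc b]"
    using Fw_even[of M b r] assms unfolding z_def by (simp add: upt_conv_Cons)
  have B: "Fw b (Suc M) False r = replicate z 0 @ 0 # [Suc (Suc M)..<Suc b]"
    using Fw_even[of "Suc M" b r] assms unfolding z_def
    by (simp add: replicate_app_Cons_same Suc_diff_le)
  show ?thesis using True A B by (simp add: hdist_append hdist_same)
next
  case False
  then have ev: "even M" by simp
  obtain r' where r: "r = Suc r'" using assms by (cases r) auto
  define z where "z = r' - (b - Suc M)"
  have A: "Fw b M True r = Suc M # replicate z 0 @ [Suc (Suc M)..<Suc b]"
    using Fw_even[of "Suc M" b r'] assms ev r unfolding z_def by simp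
  show ?thesis
  proof (cases "Suc M = b")
    case True
    have B: "Fw b (Suc M) True r = b # replicate r' 0" using Fw_top[of b r'] assms True r by simp
    have o: "odd (Suc M) = True" using ev by simp
    have "z = r'" using z_def True by simp
    then show ?thesis unfolding o A B using True by (simp add: hdist_same)
  next
    case False
    then have m3: "Suc (Suc (Suc M)) \<le> b" using assms ev
      by (metis Suc_lessI even_Suc le_eq_less_or_eq not_less_eq_eq)
    obtain r'' where r2: "r' = Suc r''" using assms r False by (cases r') auto
    have B: "Fw b (Suc M) True r = Suc (Suc M) # Suc (Suc (Suc M)) # replicate (Suc z) 0 @ [Suc (Suc (Suc (Suc M)))..<Suc b]"
    proof -
      have s1: "Fw b (Suc M) True r = Suc (Suc M) # Suc (Suc (Suc M)) # Fw b (Suc (Suc (Suc M))) False r''"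
        using assms ev r r2 m3 False by simp
      have zz: "r'' - (b - Suc (Suc (Suc M))) = Suc z" unfolding z_def using assms r r2 m3 by simp
      show ?thesis unfolding s1 using Fw_even[of "Suc (Suc (Suc M))" b r''] assms r r2 m3 zz by simp
    qed
    have A': "Fw b M True r = Suc M # replicate z 0 @ [Suc (Suc M), Suc (Suc (Suc M))] @ [Suc (Suc (Suc (Suc M)))..<Suc b]"
      using A m3 by (simp add: upt_conv_Cons)
    have B': "Fw b (Suc M) True r = (Suc (Suc M) # Suc (Suc (Suc M)) # replicate z 0 @ [0]) @ [Suc (Suc (Suc (Suc M)))..<Suc b]"
      using B by (simp add: replicate_app_Cons_same)
    define PA where "PA = Suc M # replicate z 0 @ [Suc (Suc M), Suc (Suc (Suc M))]"
    define PB where "PB = Suc (Suc M) # Suc (Suc (Suc M)) # replicate z 0 @ [0]"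
    define T where "T = [Suc (Suc (Suc (Suc M)))..<Suc b]"
    have hA: "Fw b M True r = PA @ T" using A' unfolding PA_def T_def by simp
    have hB: "Fw b (Suc M) True r = PB @ T" using B' unfolding PB_def T_def by simp
    have lAB: "length PA = length PB" unfolding PA_def PB_def by simp
    have o: "odd (Suc M) = True" using ev by simp
    have "hdist PA PB \<le> 4"
    proof -
    have "hdist (Suc M # replicate z 0 @ [Suc (Suc M), Suc (Suc (Suc M))]) (Suc (Suc M) # Suc (Suc (Suc M)) # replicate z 0 @ [0]) \<le> 4"
    proof (cases z)
      case 0 then show ?thesis by simp
    next
      case (Suc z')
      have e1: "Suc M # replicate z 0 @ [Suc (Suc M), Suc (Suc (Suc M))] = [Suc M, 0] @ replicate z' 0 @ [Suc (Suc M), Suc (Suc (Suc M))]"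
        using Suc by simp
      have e2: "Suc (Suc M) # Suc (Suc (Suc M)) # replicate z 0 @ [0] = [Suc (Suc M), Suc (Suc (Suc M))] @ replicate z' 0 @ [0, 0]"
        using Suc by (simp add: replicate_app_Cons_same)
      show ?thesis unfolding e1 e2
        by (simp only: hdist_append length_replicate list.size hdist_same) simp

    qed
    then show ?thesis unfolding PA_def PB_def .
    qed
    then show ?thesis unfolding o hA hB hdist_append[OF lAB] hdist_same by simp
  qed
qed


lemma Max_fold: "Max (set (m # l)) = foldl max (m::nat) l"
proof -
  have a: "Max (set (m # l)) = fold max l m" by (rule Max.set_eq_fold)
  have e: "(\<lambda>x s. max s x) = (max::nat\<Rightarrow>_)" by (auto simp: fun_eq_iff max_def)
  show ?thesis unfolding foldl_conv_fold e a ..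
qed
lemma okw_char: "okw b m w \<longleftrightarrow> (\<forall>i<length w. w!i \<le> Suc (foldl max m (take i w))) \<and> foldl max m w = b"
proof (induction w arbitrary: m)
  case Nil then show ?case by simp
next
  case (Cons x w)
  have "(\<forall>i<length (x#w). (x#w)!i \<le> Suc (foldl max m (take i (x#w)))) \<longleftrightarrow>
        x \<le> Suc m \<and> (\<forall>i<length w. w!i \<le> Suc (foldl max (max m x) (take i w)))"
    (is "?L \<longleftrightarrow> ?R")
  proof
    assume L: ?L
    show ?R
    proof (intro conjI allI impI)
      show "x \<le> Suc m" using L[rule_format, of 0] by simp
      fix i assume "i < length w"
      then show "w!i \<le> Suc (foldl max (max m x) (take i w))" using L[rule_format, of "Suc i"] by simp
    qed
  next
    assume R: ?R
    show ?L
    proof (intro allI impI)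
      fix i assume i: "i < length (x#w)"
      show "(x#w)!i \<le> Suc (foldl max m (take i (x#w)))"
      proof (cases i)
        case 0 then show ?thesis using R by simp
      next
        case (Suc j) then show ?thesis using R i by simp
      qed
    qed
  qed
  then show ?case using Cons.IH[of "max m x"] by simp
qed
lemma set_prefix_nth: "i < length s \<Longrightarrow> {s!j | j. j \<le> i} = set (take (Suc i) s)"
proof -
  assume "i < length s"
  then have "set (take (Suc i) s) = (!) s ` {0..<Suc i}" using nth_image[of "Suc i" s] by simp
  also have "\<dots> = {s!j | j. j \<le> i}" by auto
  finally show ?thesis by simp
qed

lemma Rstar_char: "1 \<le> n \<Longrightarrow> s \<in> Rstar n b \<longleftrightarrow> (\<exists>w. s = 0 # w \<and> length w = n - 1 \<and> okw b 0 w)"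
proof
  assume n: "1 \<le> n" and s: "s \<in> Rstar n b"
  then have r: "rgf n s" and mx: "Max (set s) = b" unfolding Rstar_def R_def by auto
  then have ls: "length s = n" and s0: "s ! 0 = 0" using n unfolding rgf_def by auto
  then obtain w where sw: "s = 0 # w" using n by (cases s) auto
  have lw: "length w = n - 1" using ls sw by simp
  have c: "\<forall>i<length w. w!i \<le> Suc (foldl max 0 (take i w))"
  proof (intro allI impI)
    fix i assume i: "i < length w"
    have "s ! (i+1) \<le> Max {s ! j | j. j \<le> i} + 1" using r i lw n unfolding rgf_def by auto
    moreover have "{s ! j | j. j \<le> i} = set (0 # take i w)"
      using set_prefix_nth[of i s] i sw by simp
    ultimately show "w!i \<le> Suc (foldl max 0 (take i w))" using sw Max_fold[of 0 "take i w"] by simp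
  qed
  have "foldl max 0 w = b" using mx sw Max_fold[of 0 w] by simp
  then show "\<exists>w. s = 0 # w \<and> length w = n - 1 \<and> okw b 0 w" using c sw lw okw_char by blast
next
  assume n: "1 \<le> n" and "\<exists>w. s = 0 # w \<and> length w = n - 1 \<and> okw b 0 w"
  then obtain w where sw: "s = 0 # w" and lw: "length w = n - 1" and ok: "okw b 0 w" by blast
  have c: "\<forall>i<length w. w!i \<le> Suc (foldl max 0 (take i w))" and f: "foldl max 0 w = b"
    using ok okw_char by blast+
  have "rgf n s" unfolding rgf_def
  proof (intro conjI impI allI)
    show "length s = n" using sw lw n by simp
    show "s ! 0 = 0" using sw by simp
    fix i assume i: "i + 1 < n"
    then have i': "i < length w" using lw by simp
    have "{s ! j | j. j \<le> i} = set (0 # take i w)"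
      using set_prefix_nth[of i s] i' sw by simp
    then show "s ! (i+1) \<le> Max {s ! j | j. j \<le> i} + 1"
      using c i' sw Max_fold[of 0 "take i w"] by simp
  qed
  moreover have "Max (set s) = b" using f sw Max_fold[of 0 w] by simp
  ultimately show "s \<in> Rstar n b" unfolding Rstar_def R_def by simp
qed

lemma okw_append: "okw b m (a @ c) \<longleftrightarrow> okp m a \<and> okw b (foldl max m a) c"
  by (induction a arbitrary: m) auto

lemma lp_char: "length s = length t \<Longrightarrow> lp e s t \<longleftrightarrow> (\<exists>k<length s. take k s = take k t \<and> s!k \<noteq> t!k \<and>
   ((e = odd (sum_list (take k s)) \<and> s!k < t!k) \<or> (e \<noteq> odd (sum_list (take k s)) \<and> s!k > t!k)))"
proof (induction s t arbitrary: e rule: list_induct2)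
  case Nil then show ?case by simp
next
  case (Cons x xs y ys)
  show ?case
  proof (cases "x = y")
    case True
    then show ?thesis using Cons.IH[of "e \<noteq> odd x"]
      by (auto simp: less_Suc_eq_0_disj)
  next
    case False
    then show ?thesis by (auto simp: less_Suc_eq_0_disj)
  qed
qed

lemma rgc_lp: "length s = length t \<Longrightarrow> rgc_less s t \<longleftrightarrow> lp False s t"
  unfolding rgc_less_def using lp_char[of s t False] by auto

lemma lp_append: "lp e (p @ u) (p @ v) = lp (e \<noteq> odd (sum_list p)) u v"
proof (induction p arbitrary: e)
  case Nil then show ?case by simp
next
  case (Cons a p)
  have "((e \<noteq> odd a) \<noteq> odd (sum_list p)) = (e \<noteq> odd (a + sum_list p))" by auto
  then show ?case using Cons.IH[of "e \<noteq> odd a"] by simp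
qed

lemma lp_decomp: "lp e u v \<Longrightarrow> \<exists>p x y u' v'. u = p @ x # u' \<and> v = p @ y # v' \<and> x \<noteq> y"
proof (induction e u v rule: lp.induct)
  case (1 e x u y v)
  show ?case
  proof (cases "x = y")
    case True
    then obtain p x' y' u' v' where "u = p @ x' # u' \<and> v = p @ y' # v' \<and> x' \<noteq> y'" using 1 by auto
    then show ?thesis using True by (metis append_Cons)
  next
    case False
    then show ?thesis by (metis append_Nil)
  qed
qed auto

lemma hamming_hdist: "length s = length t \<Longrightarrow> hamming s t = hdist s t"
proof (induction s t rule: list_induct2)
  case Nil then show ?case by (simp add: hamming_def)
next
  case (Cons x xs y ys)
  have "{i. i < length (x#xs) \<and> (x#xs)!i \<noteq> (y#ys)!i} =
        (if x = y then {} else {0}) \<union> Suc ` {i. i < length xs \<and> xs!i \<noteq> ys!i}"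
    by (auto simp: less_Suc_eq_0_disj image_iff)
  then show ?case using Cons unfolding hamming_def
    by (simp add: card_image)
qed



lemma key:
  assumes "odd b" "a \<le> M" "Suc a \<le> b" "b - max M a \<le> r"
  shows "hdist (Fw b (max M a) (odd (Suc a)) r) (Fw b (max M (Suc a)) (odd (Suc a)) r) \<le> 4"
proof (cases "a < M")
  case True
  then have "max M a = M" "max M (Suc a) = M" by auto
  then show ?thesis by (simp add: hdist_same)
next
  case False
  then have "a = M" using assms by simp
  then show ?thesis using key2[of b M r] assms by simp
qed

theorem theorem3:
  fixes b n :: nat and s t :: "nat list"
  assumes "odd b" and "b \<ge> 1" and "n > b"
    and "s \<in> Rstar n b" and "t \<in> Rstar n b"
    and "rgc_less s t"
    and "\<not> (\<exists>u \<in> Rstar n b. rgc_less s u \<and> rgc_less u t)"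
  shows "hamming s t \<le> 5"
proof -
  have n1: "1 \<le> n" using assms by simp
  obtain ws where sw: "s = 0 # ws" and lws: "length ws = n - 1" and okws: "okw b 0 ws"
    using Rstar_char[OF n1] assms(4) by blast
  obtain wt where tw: "t = 0 # wt" and lwt: "length wt = n - 1" and okwt: "okw b 0 wt"
    using Rstar_char[OF n1] assms(5) by blast
  have "lp False s t" using rgc_lp[of s t] assms(6) sw tw lws lwt by simp
  then have lpw: "lp False ws wt" using sw tw by simp
  then obtain q x y s' t' where ws: "ws = q @ x # s'" and wt: "wt = q @ y # t'" and xy: "x \<noteq> y"
    using lp_decomp by blast
  define r where "r = length t'"
  have ls': "length s' = r" using lws lwt ws wt r_def by simp
  define M where "M = foldl max 0 q"
  define e where "e = odd (sum_list q)"
  have okx: "okw b M (x # s')" and oky: "okw b M (y # t')" and okq: "okp 0 q"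
    using okws okwt ws wt okw_append unfolding M_def by auto
  have lpxy: "lp e (x # s') (y # t')" using lpw ws wt lp_append[of False q "x # s'" "y # t'"]
    unfolding e_def by simp
  then have dir: "if e then y < x else x < y" using xy by simp
  have helper: "0 # q @ c \<in> Rstar n b \<and> (rgc_less s (0 # q @ c) \<longleftrightarrow> lp e (x # s') c)
      \<and> (rgc_less (0 # q @ c) t \<longleftrightarrow> lp e c (y # t'))"
    if okc: "okw b M c" and lc: "length c = Suc r" for c
  proof (intro conjI)
    have "okw b 0 (q @ c)" using okc okq okw_append unfolding M_def by auto
    moreover have "length (q @ c) = n - 1" using lc lwt wt r_def by simp
    ultimately show "0 # q @ c \<in> Rstar n b" using Rstar_char[OF n1] by blast
    have l1: "length s = length (0 # q @ c)" using lc lwt wt r_def sw ws ls' by simp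
    show "rgc_less s (0 # q @ c) \<longleftrightarrow> lp e (x # s') c"
      using rgc_lp[OF l1] sw ws lp_append[of False q "x # s'" c] unfolding e_def by simp
    have l2: "length (0 # q @ c) = length t" using lc lwt wt r_def tw by simp
    show "rgc_less (0 # q @ c) t \<longleftrightarrow> lp e c (y # t')"
      using rgc_lp[OF l2] tw wt lp_append[of False q c "y # t'"] unfolding e_def by simp
  qed
  have fx: "max M x \<le> b" "b - max M x \<le> r" using okw_len[of b "max M x" s'] okx ls' by auto
  have fy: "max M y \<le> b" "b - max M y \<le> r" using okw_len[of b "max M y" t'] oky r_def by auto
  have xM: "x \<le> Suc M" "y \<le> Suc M" using okx oky by auto
  have T1: "t' = Fw b (max M y) (e \<noteq> odd y) r"
  proof (rule ccontr)
    assume ne: "t' \<noteq> Fw b (max M y) (e \<noteq> odd y) r"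
    define c where "c = y # Fw b (max M y) (e \<noteq> odd y) r"
    have okc: "okw b M c" unfolding c_def using Fw_ok fx fy xM by simp
    have lc: "length c = Suc r" unfolding c_def by (simp add: Fw_len)
    have "lp e (x # s') c" unfolding c_def using dir xy by simp
    moreover have "lp e c (y # t')" unfolding c_def using Fw_min[of b "max M y" t' r "e \<noteq> odd y"] oky ne r_def by simp
    ultimately show False using helper[OF okc lc] assms(7) by blast
  qed
  have T2: "s' = Fw b (max M x) (\<not> (e \<noteq> odd x)) r"
  proof (rule ccontr)
    assume ne: "s' \<noteq> Fw b (max M x) (\<not> (e \<noteq> odd x)) r"
    define G where "G = Fw b (max M x) (\<not> (e \<noteq> odd x)) r"
    define c where "c = x # G"
    have okc: "okw b M c" unfolding c_def G_def using Fw_ok fx xM by simp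
    have lc: "length c = Suc r" unfolding c_def G_def by (simp add: Fw_len)
    have "lp (\<not> (e \<noteq> odd x)) G s'" unfolding G_def
      using Fw_min[of b "max M x" s' r "\<not> (e \<noteq> odd x)"] okx ne ls' by simp
    then have "lp (e \<noteq> odd x) s' G" using lp_swap[of "\<not> (e \<noteq> odd x)" s' G] by simp
    then have "lp e (x # s') c" unfolding c_def by simp
    moreover have "lp e c (y # t')" unfolding c_def using dir xy by simp
    ultimately show False using helper[OF okc lc] assms(7) by blast
  qed
  have T3: "\<not> (min x y < d \<and> d < max x y)" for d
  proof
    assume d: "min x y < d \<and> d < max x y"
    define c where "c = d # Fw b (max M d) (e \<noteq> odd d) r"
    have "d \<le> Suc M" using d xM by auto
    moreover have "max M d \<le> b" using d fx fy by auto
    moreover have "b - max M d \<le> r" using d fx fy by (auto simp: min_def max_def split: if_splits)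
    ultimately have okc: "okw b M c" unfolding c_def using Fw_ok by simp
    have lc: "length c = Suc r" unfolding c_def by (simp add: Fw_len)
    have "lp e (x # s') c" unfolding c_def using dir d by (auto split: if_splits)
    moreover have "lp e c (y # t')" unfolding c_def using dir d by (auto split: if_splits)
    ultimately show False using helper[OF okc lc] assms(7) by blast
  qed
  have h1: "hamming s t = 1 + hdist s' t'"
  proof -
    have "hamming s t = hdist s t" using hamming_hdist[of s t] sw tw lws lwt by simp
    also have "\<dots> = hdist ((0 # q) @ x # s') ((0 # q) @ y # t')" using sw tw ws wt by simp
    also have "\<dots> = 1 + hdist s' t'" using xy by (simp only: hdist_append[of "0 # q" "0 # q"] hdist_same) simp
    finally show ?thesis .
  qed
  have "hdist s' t' \<le> 4"
  proof (cases e)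
    case False
    then have y: "y = Suc x" using dir T3[of "Suc x"] by auto
    have "hdist s' t' = hdist (Fw b (max M x) (odd (Suc x)) r) (Fw b (max M (Suc x)) (odd (Suc x)) r)"
      using T1 T2 False y by simp
    also have "\<dots> \<le> 4" using key[of b x M r] assms(1) xM fx fy y by simp
    finally show ?thesis .
  next
    case True
    then have x: "x = Suc y" using dir T3[of "Suc y"] by auto
    have "hdist s' t' = hdist (Fw b (max M (Suc y)) (odd (Suc y)) r) (Fw b (max M y) (odd (Suc y)) r)"
      using T1 T2 True x by simp
    also have "\<dots> \<le> 4" using key[of b y M r] assms(1) xM fx fy x hdist_sym by simp
    finally show ?thesis .
  qed
  then show ?thesis using h1 by simp
qed

end
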